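(* Let $\tilde{\mathcal T}$ be an extended generic $(n,d)$-tropical oriented matroid. Then every semitype $T\in\tilde{\mathcal T}$ is a refinement of some honest type $T^+\in\tilde{\mathcal T}$, i.e. $G(T)\subseteq G(T^+)$.
   Context: Fix positive integers $n,d$; $K_{n,d}$ is the complete bipartite graph with left vertex set $[n]$ and right vertex set $[\bar d]=\{\bar1,\dots,\bar d\}$. An $(n,d)$-semitype is an $n$-tuple $T=(T_1,\dots,T_n)$ of (possibly empty) subsets of $[\bar d]$; it is an honest type (or type) if all $T_i$ are nonempty. Its graph $G(T)\subseteq K_{n,d}$ has edge $(i,\bar j)$ iff $\bar j\in T_i$. A semitype $T'$ is a refinement of $T$ if $G(T')\subseteq G(T)$. Two acyclic subgraphs of $K_{n,d}$ are compatible if whenever both contain a perfect matching between the same vertex sets $I\subseteq[n]$, $\bar J\subseteq[\bar d]$, these matchings coincide. An extended generic $(n,d)$-tropical oriented matroid is a collection $\tilde{\mathcal T}$ of $(n,d)$-semitypes, all with acyclic graphs, such that: (Boundary) for every $\bar j\in[\bar d]$, $(\{\bar j\},\dots,\{\bar j\})\in\tilde{\mathcal T}$; (Surrounding) if $T\in\tilde{\mathcal T}$ and $T'$ is a semitype refining $T$, then $T'\in\tilde{\mathcal T}$; (Compatibility) $G(U),G(V)$ are compatible for all $U,V\in\tilde{\mathcal T}$; (Elimination) for all $U,V\in\tilde{\mathcal T}$ and $i\in[n]$ there is $W\in\tilde{\mathcal T}$ with $W_i=U_i\cup V_i$ and $W_{i'}\in\{U_{i'},V_{i'}\}$ for all $i'\neq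 i$. *)

theory Defs
  imports Main
begin

text \<open>Conventions: left vertices of K_{n,d} are 0..n-1, right vertices are 0..d-1.
An (n,d)-semitype is a list of length n of subsets of {0..<d}.\<close>

definition semitype :: "nat \<Rightarrow> nat \<Rightarrow> nat set list \<Rightarrow> bool" where
  "semitype n d T \<longleftrightarrow> length T = n \<and> (\<forall>i<n. T ! i \<subseteq> {0..<d})"

definition honest_type :: "nat \<Rightarrow> nat \<Rightarrow> nat set list \<Rightarrow> bool" where
  "honest_type n d T \<longleftrightarrow> semitype n d T \<and> (\<forall>i<n. T ! i \<noteq> {})"

definition graph_of :: "nat set list \<Rightarrow> (nat \<times> nat) set" where
  "graph_of T = {(i, j). i < length T \<and> j \<in> T ! i}"

definition bip_acyclic :: "(nat \<times> nat) set \<Rightarrow> bool" where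
  "bip_acyclic E \<longleftrightarrow> \<not> (\<exists>is js. length is = length js \<and> 2 \<le> length is \<and> distinct is \<and> distinct js \<and>
      (\<forall>t<length is. (is ! t, js ! t) \<in> E \<and> (is ! (Suc t mod length is), js ! t) \<in> E))"

definition perfect_matching :: "(nat \<times> nat) set \<Rightarrow> nat set \<Rightarrow> nat set \<Rightarrow> bool" where
  "perfect_matching M I J \<longleftrightarrow> M \<subseteq> I \<times> J \<and>
     (\<forall>i\<in>I. \<exists>!j. (i, j) \<in> M) \<and> (\<forall>j\<in>J. \<exists>!i. (i, j) \<in> M)"

definition compatible :: "(nat \<times> nat) set \<Rightarrow> (nat \<times> nat) set \<Rightarrow> bool" where
  "compatible E1 E2 \<longleftrightarrow> (\<forall>I J M1 M2. M1 \<subseteq> E1 \<and> perfect_matching M1 I J \<and>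
      M2 \<subseteq> E2 \<and> perfect_matching M2 I J \<longrightarrow> M1 = M2)"

definition ext_generic_TOM :: "nat \<Rightarrow> nat \<Rightarrow> nat set list set \<Rightarrow> bool" where
  "ext_generic_TOM n d TT \<longleftrightarrow>
     (\<forall>T\<in>TT. semitype n d T \<and> bip_acyclic (graph_of T)) \<and>
     (\<forall>j<d. replicate n {j} \<in> TT) \<and>
     (\<forall>T\<in>TT. \<forall>T'. semitype n d T' \<and> graph_of T' \<subseteq> graph_of T \<longrightarrow> T' \<in> TT) \<and>
     (\<forall>U\<in>TT. \<forall>V\<in>TT. compatible (graph_of U) (graph_of V)) \<and>
     (\<forall>U\<in>TT. \<forall>V\<in>TT. \<forall>i<n. \<exists>W\<in>TT. W ! i = U ! i \<union> V ! i \<and>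
        (\<forall>i'<n. i' \<noteq> i \<longrightarrow> W ! i' \<in> {U ! i', V ! i'}))"

end

theory Submission
  imports Defs
begin


definition bnd :: "nat \<Rightarrow> nat set \<Rightarrow> nat \<Rightarrow> nat set list" where
  "bnd n R j = map (\<lambda>p. if p \<in> R then {j} else {}) [0..<n]"

lemma bnd_len[simp]: "length (bnd n R j) = n" by (simp add: bnd_def)
lemma bnd_nth[simp]: "p < n \<Longrightarrow> bnd n R j ! p = (if p \<in> R then {j} else {})"
  by (simp add: bnd_def)

definition GA :: "nat \<Rightarrow> nat set \<Rightarrow> nat set \<Rightarrow> nat set list set \<Rightarrow> bool" where
  "GA n R C TT \<longleftrightarrow> R \<subseteq> {..<n} \<and> finite C \<and>
   (\<forall>T\<in>TT. length T = n \<and> (\<forall>p<n. T!p \<subseteq> C) \<and> (\<forall>p<n. p \<notin> R \<longrightarrow> T!p = {}) \<and> bip_acyclic (graph_of T)) \<and>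
   (\<forall>j\<in>C. bnd n R j \<in> TT) \<and>
   (\<forall>T\<in>TT. \<forall>T'. length T' = n \<and> (\<forall>p<n. T'!p \<subseteq> T!p) \<longrightarrow> T' \<in> TT) \<and>
   (\<forall>U\<in>TT. \<forall>V\<in>TT. \<forall>i<n. \<exists>W\<in>TT. W!i = U!i \<union> V!i \<and> (\<forall>i'<n. i' \<noteq> i \<longrightarrow> W!i' = U!i' \<or> W!i' = V!i'))"

definition sub :: "nat \<Rightarrow> nat set list \<Rightarrow> nat set list \<Rightarrow> bool" where
  "sub n U V \<longleftrightarrow> (\<forall>p<n. U!p \<subseteq> V!p)"

lemma GA_len: "GA n R C TT \<Longrightarrow> T \<in> TT \<Longrightarrow> length T = n" by (simp add: GA_def)
lemma GA_C: "GA n R C TT \<Longrightarrow> T \<in> TT \<Longrightarrow> p < n \<Longrightarrow> T!p \<subseteq> C" by (simp add: GA_def)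
lemma GA_R: "GA n R C TT \<Longrightarrow> T \<in> TT \<Longrightarrow> p < n \<Longrightarrow> p \<notin> R \<Longrightarrow> T!p = {}" by (simp add: GA_def)
lemma GA_acyc: "GA n R C TT \<Longrightarrow> T \<in> TT \<Longrightarrow> bip_acyclic (graph_of T)" by (simp add: GA_def)
lemma GA_bnd: "GA n R C TT \<Longrightarrow> j \<in> C \<Longrightarrow> bnd n R j \<in> TT" by (simp add: GA_def)
lemma GA_sur: "GA n R C TT \<Longrightarrow> T \<in> TT \<Longrightarrow> length T' = n \<Longrightarrow> (\<And>p. p<n \<Longrightarrow> T'!p \<subseteq> T!p) \<Longrightarrow> T' \<in> TT"
  unfolding GA_def by blast
lemma GA_elim: "GA n R C TT \<Longrightarrow> U \<in> TT \<Longrightarrow> V \<in> TT \<Longrightarrow> i < n \<Longrightarrow>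
   \<exists>W\<in>TT. W!i = U!i \<union> V!i \<and> (\<forall>i'<n. i' \<noteq> i \<longrightarrow> W!i' = U!i' \<or> W!i' = V!i')"
  unfolding GA_def by blast
lemma GA_finC: "GA n R C TT \<Longrightarrow> finite C" by (simp add: GA_def)
lemma GA_Rn: "GA n R C TT \<Longrightarrow> R \<subseteq> {..<n}" by (simp add: GA_def)

lemma eq_by_sub: "length U = n \<Longrightarrow> length V = n \<Longrightarrow> sub n U V \<Longrightarrow> sub n V U \<Longrightarrow> U = V"
  unfolding sub_def by (metis nth_equalityI subset_antisym)

lemma lemmaI_aux:
  assumes GA: "GA n R C TT" and W: "W \<in> TT" and maxW: "\<forall>U\<in>TT. sub n W U \<longrightarrow> U = W"
  shows "card {p. p < n \<and> \<not> W!p \<subseteq> U!p} = k \<Longrightarrow> U \<in> TT \<Longrightarrow> U \<noteq> W \<Longrightarrow> \<exists>p<n. U!p \<subset> W!p"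
proof (induction k arbitrary: U rule: less_induct)
  case (less k U)
  show ?case
  proof (rule ccontr)
    assume nos: "\<not> (\<exists>p<n. U!p \<subset> W!p)"
    show False
    proof (cases "{p. p < n \<and> \<not> W!p \<subseteq> U!p} = {}")
      case True
      then have "sub n W U" unfolding sub_def by blast
      with maxW less.prems show False by blast
    next
      case False
      then obtain q where q: "q < n" "\<not> W!q \<subseteq> U!q" by blast
      have Uq: "\<not> U!q \<subseteq> W!q" using nos q by blast
      obtain V where V: "V \<in> TT" "V!q = U!q \<union> W!q"
        and Vo: "\<forall>i'<n. i' \<noteq> q \<longrightarrow> V!i' = U!i' \<or> V!i' = W!i'"
        using GA_elim[OF GA less.prems(2) W q(1)] by blast
      have sub: "{p. p < n \<and> \<not> W!p \<subseteq> V!p} \<subseteq> {p. p < n \<and> \<not> W!p \<subseteq> U!p} - {q}"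
        using V(2) Vo by auto
      have "card {p. p < n \<and> \<not> W!p \<subseteq> V!p} < k"
      proof -
        have "card {p. p < n \<and> \<not> W!p \<subseteq> V!p} \<le> card ({p. p < n \<and> \<not> W!p \<subseteq> U!p} - {q})"
          by (rule card_mono[OF _ sub]) auto
        also have "\<dots> < card {p. p < n \<and> \<not> W!p \<subseteq> U!p}"
          by (rule card_Diff1_less) (use q in auto)
        finally show ?thesis using less.prems(1) by simp
      qed
      moreover have "V \<noteq> W" using V(2) Uq by auto
      ultimately obtain p where p: "p < n" "V!p \<subset> W!p" using less.IH V(1) by blast
      show False
      proof (cases "p = q")
        case True then show ?thesis using p V(2) by auto
      next
        case False
        then have "V!p = U!p \<or> V!p = W!p" using Vo p(1) by blast
        then show ?thesis using p nos by auto
      qed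
    qed
  qed
qed

lemma lemmaI:
  assumes "GA n R C TT" "W \<in> TT" "\<forall>U\<in>TT. sub n W U \<longrightarrow> U = W" "U \<in> TT" "U \<noteq> W"
  shows "\<exists>p<n. U!p \<subset> W!p"
  using lemmaI_aux[OF assms(1-3) refl assms(4,5)] .



lemma GA_row:
  assumes GA: "GA n R C TT" and r: "r < n"
  shows "GA n (R - {r}) C {T \<in> TT. T!r = {}}"
proof -
  have 1: "R - {r} \<subseteq> {..<n}" using GA_Rn[OF GA] by auto
  have 2: "\<forall>T\<in>{T \<in> TT. T!r = {}}. length T = n \<and> (\<forall>p<n. T!p \<subseteq> C) \<and> (\<forall>p<n. p \<notin> R - {r} \<longrightarrow> T!p = {}) \<and> bip_acyclic (graph_of T)"
    using GA_len[OF GA] GA_C[OF GA] GA_R[OF GA] GA_acyc[OF GA] by auto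
  have 3: "\<forall>j\<in>C. bnd n (R - {r}) j \<in> {T \<in> TT. T!r = {}}"
  proof
    fix j assume j: "j \<in> C"
    have "bnd n (R - {r}) j \<in> TT"
      by (rule GA_sur[OF GA GA_bnd[OF GA j]]) auto
    then show "bnd n (R - {r}) j \<in> {T \<in> TT. T!r = {}}" using r by auto
  qed
  have 4: "\<forall>T\<in>{T \<in> TT. T!r = {}}. \<forall>T'. length T' = n \<and> (\<forall>p<n. T'!p \<subseteq> T!p) \<longrightarrow> T' \<in> {T \<in> TT. T!r = {}}"
  proof (intro ballI allI impI)
    fix T T' assume T: "T \<in> {T \<in> TT. T!r = {}}" and T': "length T' = n \<and> (\<forall>p<n. T'!p \<subseteq> T!p)"
    then have "T' \<in> TT" using GA_sur[OF GA] by blast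
    moreover have "T'!r = {}" using T T' r by blast
    ultimately show "T' \<in> {T \<in> TT. T!r = {}}" by simp
  qed
  have 5: "\<forall>U\<in>{T \<in> TT. T!r = {}}. \<forall>V\<in>{T \<in> TT. T!r = {}}. \<forall>i<n. \<exists>W\<in>{T \<in> TT. T!r = {}}. W!i = U!i \<union> V!i \<and> (\<forall>i'<n. i' \<noteq> i \<longrightarrow> W!i' = U!i' \<or> W!i' = V!i')"
  proof (intro ballI allI impI)
    fix U V i assume U: "U \<in> {T \<in> TT. T!r = {}}" and V: "V \<in> {T \<in> TT. T!r = {}}" and i: "i < n"
    obtain W where W: "W \<in> TT" "W!i = U!i \<union> V!i" "\<forall>i'<n. i' \<noteq> i \<longrightarrow> W!i' = U!i' \<or> W!i' = V!i'"
      using GA_elim[OF GA _ _ i] U V by blast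
    have "W!r = {}" using W U V r by (cases "r = i") auto
    then show "\<exists>W\<in>{T \<in> TT. T!r = {}}. W!i = U!i \<union> V!i \<and> (\<forall>i'<n. i' \<noteq> i \<longrightarrow> W!i' = U!i' \<or> W!i' = V!i')"
      using W by blast
  qed
  have 6: "finite C" using GA_finC[OF GA] .
  show ?thesis unfolding GA_def using 1 2 3 4 5 6 by (intro conjI)
qed

lemma GA_col:
  assumes GA: "GA n R C TT"
  shows "GA n R (C - {c}) {T \<in> TT. \<forall>p<n. c \<notin> T!p}"
proof -
  let ?S = "{T \<in> TT. \<forall>p<n. c \<notin> T!p}"
  have 2: "\<forall>T\<in>?S. length T = n \<and> (\<forall>p<n. T!p \<subseteq> C - {c}) \<and> (\<forall>p<n. p \<notin> R \<longrightarrow> T!p = {}) \<and> bip_acyclic (graph_of T)"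
  proof
    fix T assume T: "T \<in> ?S"
    then have TT: "T \<in> TT" by simp
    have "\<forall>p<n. T!p \<subseteq> C - {c}" using GA_C[OF GA TT] T by blast
    then show "length T = n \<and> (\<forall>p<n. T!p \<subseteq> C - {c}) \<and> (\<forall>p<n. p \<notin> R \<longrightarrow> T!p = {}) \<and> bip_acyclic (graph_of T)"
      using GA_len[OF GA TT] GA_R[OF GA TT] GA_acyc[OF GA TT] by blast
  qed
  have 3: "\<forall>j\<in>C - {c}. bnd n R j \<in> ?S"
  proof
    fix j assume j: "j \<in> C - {c}"
    have "\<forall>p<n. c \<notin> bnd n R j ! p" using j by simp
    then show "bnd n R j \<in> ?S" using GA_bnd[OF GA] j by blast
  qed
  have 4: "\<forall>T\<in>?S. \<forall>T'. length T' = n \<and> (\<forall>p<n. T'!p \<subseteq> T!p) \<longrightarrow> T' \<in> ?S"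
  proof (intro ballI allI impI)
    fix T T' assume T: "T \<in> ?S" and T': "length T' = n \<and> (\<forall>p<n. T'!p \<subseteq> T!p)"
    then have "T' \<in> TT" using GA_sur[OF GA] by blast
    then show "T' \<in> ?S" using T T' by blast
  qed
  have 5: "\<forall>U\<in>?S. \<forall>V\<in>?S. \<forall>i<n. \<exists>W\<in>?S. W!i = U!i \<union> V!i \<and> (\<forall>i'<n. i' \<noteq> i \<longrightarrow> W!i' = U!i' \<or> W!i' = V!i')"
  proof (intro ballI allI impI)
    fix U V i assume U: "U \<in> ?S" and V: "V \<in> ?S" and i: "i < n"
    have UT: "U \<in> TT" and VT: "V \<in> TT" using U V by auto
    obtain W where W: "W \<in> TT" "W!i = U!i \<union> V!i" "\<forall>i'<n. i' \<noteq> i \<longrightarrow> W!i' = U!i' \<or> W!i' = V!i'"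
      using GA_elim[OF GA UT VT i] by blast
    have "\<forall>p<n. c \<notin> W!p"
    proof (intro allI impI)
      fix p assume p: "p < n"
      show "c \<notin> W!p" using W U V p i by (cases "p = i") auto
    qed
    then show "\<exists>W\<in>?S. W!i = U!i \<union> V!i \<and> (\<forall>i'<n. i' \<noteq> i \<longrightarrow> W!i' = U!i' \<or> W!i' = V!i')"
      using W by blast
  qed
  have 6: "finite (C - {c})" using GA_finC[OF GA] by simp
  have 1: "R \<subseteq> {..<n}" using GA_Rn[OF GA] .
  show ?thesis unfolding GA_def using 1 2 3 4 5 6 by (intro conjI)
qed

lemma GA_finite: assumes GA: "GA n R C TT" shows "finite TT"
proof -
  have "TT \<subseteq> {xs. set xs \<subseteq> Pow C \<and> length xs = n}"
  proof
    fix T assume T: "T \<in> TT"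
    have "set T \<subseteq> Pow C"
    proof
      fix S assume "S \<in> set T"
      then obtain p where "p < length T" "S = T!p" by (metis in_set_conv_nth)
      then show "S \<in> Pow C" using GA_C[OF GA T] GA_len[OF GA T] by auto
    qed
    then show "T \<in> {xs. set xs \<subseteq> Pow C \<and> length xs = n}" using GA_len[OF GA T] by simp
  qed
  moreover have "finite {xs. set xs \<subseteq> Pow C \<and> length xs = n}"
    by (rule finite_lists_length_eq) (simp add: GA_finC[OF GA])
  ultimately show ?thesis by (rule finite_subset)
qed

definition wt :: "nat \<Rightarrow> nat set list \<Rightarrow> nat" where "wt n U = (\<Sum>p<n. card (U!p))"

lemma exists_max:
  assumes GA: "GA n R C TT" and T: "T \<in> TT"
  shows "\<exists>W\<in>TT. sub n T W \<and> (\<forall>U\<in>TT. sub n W U \<longrightarrow> U = W)"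
proof -
  let ?S = "{U \<in> TT. sub n T U}"
  have fin: "finite ?S" using GA_finite[OF GA] by simp
  have ne: "T \<in> ?S" using T by (simp add: sub_def)
  have fi: "finite (wt n ` ?S)" using fin by (rule finite_imageI)
  have nei: "wt n ` ?S \<noteq> {}" using ne by blast
  have "Max (wt n ` ?S) \<in> wt n ` ?S" by (rule Max_in[OF fi nei])
  then obtain W where W: "W \<in> ?S" and Wv: "wt n W = Max (wt n ` ?S)"
    by (metis (no_types, lifting) imageE)
  have Wm: "\<And>U. U \<in> ?S \<Longrightarrow> wt n U \<le> wt n W"
  proof -
    fix U assume "U \<in> ?S"
    then have "wt n U \<in> wt n ` ?S" by (rule imageI)
    then show "wt n U \<le> wt n W" using Wv Max_ge[OF fi] by simp
  qed
  have WT: "W \<in> TT" using W by simp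
  have TW: "sub n T W" using W by simp
  have "\<forall>U\<in>TT. sub n W U \<longrightarrow> U = W"
  proof (intro ballI impI)
    fix U assume U: "U \<in> TT" and WU: "sub n W U"
    have "sub n T U" using TW WU unfolding sub_def by (meson order_trans)
    then have "U \<in> ?S" using U by simp
    then have le: "wt n U \<le> wt n W" by (rule Wm)
    have finr: "\<And>p. p < n \<Longrightarrow> finite (U!p)"
      using GA_C[OF GA U] GA_finC[OF GA] by (meson finite_subset)
    have "sub n U W"
    proof (rule ccontr)
      assume "\<not> sub n U W"
      then obtain q where q: "q < n" "\<not> U!q \<subseteq> W!q" unfolding sub_def by blast
      have a1: "\<forall>x\<in>{..<n}. card (W!x) \<le> card (U!x)"
      proof
        fix x assume "x \<in> {..<n}"
        then have x: "x < n" by simp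
        show "card (W!x) \<le> card (U!x)" using WU x finr[OF x] unfolding sub_def by (simp add: card_mono)
      qed
      have a2: "card (W!q) < card (U!q)"
      proof -
        have "W!q \<subset> U!q" using WU q unfolding sub_def by blast
        then show ?thesis using finr[OF q(1)] by (rule psubset_card_mono[rotated])
      qed
      have "wt n W < wt n U" unfolding wt_def
        by (rule sum_strict_mono_ex1) (use a1 a2 q in auto)
      with le show False by simp
    qed
    then show "U = W" using eq_by_sub GA_len[OF GA U] GA_len[OF GA WT] WU by blast
  qed
  then show ?thesis using WT TW by blast
qed



lemma cyc_gen:
  assumes "length I = L" "length J = L" "2 \<le> L" "distinct I" "distinct J"
    and e: "\<And>t. Suc t < L \<Longrightarrow> (I!t, J!t) \<in> E \<and> (I!Suc t, J!t) \<in> E"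
    and l1: "(I!(L-1), J!(L-1)) \<in> E" and l2: "(I!0, J!(L-1)) \<in> E"
  shows "\<not> bip_acyclic E"
proof -
  have "\<forall>t<length I. (I!t, J!t) \<in> E \<and> (I!(Suc t mod length I), J!t) \<in> E"
  proof (intro allI impI)
    fix t assume t: "t < length I"
    show "(I!t, J!t) \<in> E \<and> (I!(Suc t mod length I), J!t) \<in> E"
    proof (cases "Suc t < L")
      case True
      then show ?thesis using e[OF True] assms(1) by simp
    next
      case False
      then have st: "Suc t = L" using t assms(1) by simp
      then have "t = L - 1" by simp
      moreover have "Suc t mod L = 0" using st by simp
      ultimately show ?thesis using l1 l2 assms(1) by simp
    qed
  qed
  then show ?thesis unfolding bip_acyclic_def using assms(1-5) by metis
qed

definition ispath :: "(nat \<times> nat) set \<Rightarrow> nat list \<Rightarrow> nat list \<Rightarrow> bool" where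
  "ispath E xs ys \<longleftrightarrow> length xs = Suc (length ys) \<and> distinct xs \<and> distinct ys \<and> set xs \<subseteq> fst ` E \<and>
     (\<forall>t<length ys. (xs!t, ys!t) \<in> E \<and> (xs!Suc t, ys!t) \<in> E)"

lemma close1:
  assumes P: "ispath E xs ys" and s: "Suc s < length ys" and ed: "(xs!length ys, ys!s) \<in> E"
  shows "\<not> bip_acyclic E"
proof -
  let ?m = "length ys"
  let ?I = "drop (Suc s) xs" and ?J = "drop (Suc s) ys @ [ys!s]"
  have lis: "length xs = Suc ?m" using P by (simp add: ispath_def)
  have dI: "distinct ?I" using P by (simp add: ispath_def)
  have dj: "distinct ys" using P by (simp add: ispath_def)
  have "ys!s \<notin> set (drop (Suc s) ys)"
  proof -
    have "ys = take (Suc s) ys @ drop (Suc s) ys" by simp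
    moreover have "ys!s \<in> set (take (Suc s) ys)" using s by (simp add: in_set_conv_nth) (metis lessI nth_take)
    ultimately show ?thesis using dj by (metis disjoint_iff distinct_append)
  qed
  then have dJ: "distinct ?J" using dj by simp
  have pe: "\<And>t. t < ?m \<Longrightarrow> (xs!t, ys!t) \<in> E \<and> (xs!Suc t, ys!t) \<in> E" using P by (simp add: ispath_def)
  show ?thesis
  proof (rule cyc_gen[of ?I "?m - s" ?J])
    show "length ?I = ?m - s" using lis by simp
    show "length ?J = ?m - s" using s by simp
    show "2 \<le> ?m - s" using s by simp
    show "distinct ?I" by (rule dI)
    show "distinct ?J" by (rule dJ)
  next
    fix t assume t: "Suc t < ?m - s"
    have tl: "t < length ys - Suc s" using t by simp
    have "?I!t = xs!(Suc s + t)" using lis s t by simp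
    moreover have "?I!Suc t = xs!Suc (Suc s + t)" using lis s t by simp
    moreover have "?J!t = ys!(Suc s + t)" using s tl by (simp add: nth_append)
    ultimately show "(?I!t, ?J!t) \<in> E \<and> (?I!Suc t, ?J!t) \<in> E" using pe[of "Suc s + t"] t by simp
  next
    have "?I!(?m - s - 1) = xs!(Suc s + (?m - s - 1))" using lis s by simp
    also have "Suc s + (?m - s - 1) = ?m" using s by simp
    finally have "?I!(?m - s - 1) = xs!?m" .
    moreover have "?J!(?m - s - 1) = ys!s" using s by (simp add: nth_append)
    ultimately show "(?I!(?m - s - 1), ?J!(?m - s - 1)) \<in> E" using ed by simp
  next
    have "?I!0 = xs!Suc s" using lis s by simp
    moreover have "?J!(?m - s - 1) = ys!s" using s by (simp add: nth_append)
    ultimately show "(?I!0, ?J!(?m - s - 1)) \<in> E" using pe[of s] s by simp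
  qed
qed

lemma close2:
  assumes P: "ispath E xs ys" and s: "s < length ys" and ed: "(xs!length ys, y) \<in> E"
    and ed2: "(xs!s, y) \<in> E" and y: "y \<notin> set ys"
  shows "\<not> bip_acyclic E"
proof -
  let ?m = "length ys"
  let ?I = "drop s xs" and ?J = "drop s ys @ [y]"
  have lis: "length xs = Suc ?m" using P by (simp add: ispath_def)
  have dI: "distinct ?I" using P by (simp add: ispath_def)
  have dj: "distinct ys" using P by (simp add: ispath_def)
  have "y \<notin> set (drop s ys)" using y by (meson in_set_dropD)
  then have dJ: "distinct ?J" using dj by simp
  have pe: "\<And>t. t < ?m \<Longrightarrow> (xs!t, ys!t) \<in> E \<and> (xs!Suc t, ys!t) \<in> E" using P by (simp add: ispath_def)
  show ?thesis
  proof (rule cyc_gen[of ?I "Suc ?m - s" ?J])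
    show "length ?I = Suc ?m - s" using lis by simp
    show "length ?J = Suc ?m - s" using s by simp
    show "2 \<le> Suc ?m - s" using s by simp
    show "distinct ?I" by (rule dI)
    show "distinct ?J" by (rule dJ)
  next
    fix t assume t: "Suc t < Suc ?m - s"
    have tl: "t < length ys - s" using t by simp
    have "?I!t = xs!(s + t)" using lis s t by simp
    moreover have "?I!Suc t = xs!Suc (s + t)" using lis s t by simp
    moreover have "?J!t = ys!(s + t)" using s tl by (simp add: nth_append)
    ultimately show "(?I!t, ?J!t) \<in> E \<and> (?I!Suc t, ?J!t) \<in> E" using pe[of "s + t"] t by simp
  next
    have "?I!(Suc ?m - s - 1) = xs!?m" using lis s by simp
    moreover have "?J!(Suc ?m - s - 1) = y" using s by (simp add: nth_append)
    ultimately show "(?I!(Suc ?m - s - 1), ?J!(Suc ?m - s - 1)) \<in> E" using ed by simp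
  next
    have "?I!0 = xs!s" using lis s by simp
    moreover have "?J!(Suc ?m - s - 1) = y" using s by (simp add: nth_append)
    ultimately show "(?I!0, ?J!(Suc ?m - s - 1)) \<in> E" using ed2 by simp
  qed
qed

lemma cycle_exists:
  assumes fin: "finite E" and ne: "E \<noteq> {}"
    and hr: "\<And>a y. (a,y) \<in> E \<Longrightarrow> \<exists>y'. y' \<noteq> y \<and> (a,y') \<in> E"
    and hc: "\<And>a y. (a,y) \<in> E \<Longrightarrow> \<exists>a'. a' \<noteq> a \<and> (a',y) \<in> E"
  shows "\<not> bip_acyclic E"
proof (rule ccontr)
  assume acyc: "\<not> \<not> bip_acyclic E"
  let ?Q = "\<lambda>k. \<exists>xs ys. ispath E xs ys \<and> length ys = k"
  obtain a0 y0 where a0: "(a0,y0) \<in> E" using ne by auto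
  have q0: "?Q 0"
  proof -
    have "ispath E [a0] []" unfolding ispath_def using a0 by force
    then show ?thesis by blast
  qed
  have bd: "\<forall>k. ?Q k \<longrightarrow> k \<le> card (fst ` E)"
  proof (intro allI impI)
    fix k assume "?Q k"
    then obtain xs ys where P: "ispath E xs ys" "length ys = k" by blast
    have "card (set xs) \<le> card (fst ` E)" using P(1) fin by (intro card_mono) (auto simp: ispath_def)
    moreover have "card (set xs) = length xs" using P(1) by (simp add: ispath_def distinct_card)
    ultimately show "k \<le> card (fst ` E)" using P by (simp add: ispath_def)
  qed
  obtain k where k: "?Q k" and kmax: "\<forall>k'. ?Q k' \<longrightarrow> k' \<le> k"
    using Nat.ex_has_greatest_nat[of ?Q 0 "card (fst ` E)"] q0 bd by blast
  obtain xs ys where P: "ispath E xs ys" and lj: "length ys = k" using k by blast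
  let ?a = "xs!k"
  have lis: "length xs = Suc k" using P lj by (simp add: ispath_def)
  have ain: "?a \<in> fst ` E" using P lis by (auto simp: ispath_def)
  obtain y where ay: "(?a, y) \<in> E" and yne: "0 < k \<Longrightarrow> y \<noteq> ys!(k-1)"
  proof (cases k)
    case 0
    then obtain y where "(?a, y) \<in> E" using ain by force
    then show ?thesis using that 0 by blast
  next
    case (Suc k')
    then have "(xs!Suc k', ys!k') \<in> E" using P lj by (simp add: ispath_def)
    then obtain y where "y \<noteq> ys!k'" "(xs!Suc k', y) \<in> E" using hr by blast
    then show ?thesis using that Suc by simp
  qed
  show False
  proof (cases "y \<in> set ys")
    case True
    then obtain s where s: "s < k" "ys!s = y" using lj by (metis in_set_conv_nth)
    have "Suc s < k" using s yne by (cases "Suc s = k") auto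
    moreover have "(xs!length ys, ys!s) \<in> E" using ay s lj by simp
    ultimately have "\<not> bip_acyclic E" using close1[OF P, of s] lj by simp
    then show False using acyc by simp
  next
    case False
    obtain b where b: "b \<noteq> ?a" "(b, y) \<in> E" using hc[OF ay] by blast
    show False
    proof (cases "b \<in> set xs")
      case True
      then obtain s where s: "s < Suc k" "xs!s = b" using lis by (metis in_set_conv_nth)
      have "s < k" using s b by (cases "s = k") auto
      then show False using close2[OF P, of s y] lj ay s b False acyc by simp
    next
      case bn: False
      have "ispath E (xs @ [b]) (ys @ [y])"
        unfolding ispath_def
      proof (intro conjI)
        show "length (xs @ [b]) = Suc (length (ys @ [y]))" using lis lj by simp
        show "distinct (xs @ [b])" using P bn by (simp add: ispath_def)
        show "distinct (ys @ [y])" using P False by (simp add: ispath_def)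
        show "set (xs @ [b]) \<subseteq> fst ` E" using P b by (force simp: ispath_def)
        show "\<forall>t<length (ys @ [y]). ((xs @ [b])!t, (ys @ [y])!t) \<in> E \<and> ((xs @ [b])!Suc t, (ys @ [y])!t) \<in> E"
        proof (intro allI impI)
          fix t assume t: "t < length (ys @ [y])"
          show "((xs @ [b])!t, (ys @ [y])!t) \<in> E \<and> ((xs @ [b])!Suc t, (ys @ [y])!t) \<in> E"
          proof (cases "t < k")
            case True
            then show ?thesis using P lis lj by (simp add: ispath_def nth_append)
          next
            case False
            then have "t = k" using t lj by simp
            then show ?thesis using ay b lis lj by (simp add: nth_append)
          qed
        qed
      qed
      then have "?Q (Suc k)" using lj by (metis length_append_singleton)
      then show False using kmax by fastforce
    qed
  qed
qed



lemma GA_Rne: "GA n R C TT \<Longrightarrow> T \<in> TT \<Longrightarrow> p < n \<Longrightarrow> T!p \<noteq> {} \<Longrightarrow> p \<in> R"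
  using GA_R by blast

lemma col_step:
  assumes GA: "GA n R C TT" and W: "W \<in> TT" and maxW: "\<forall>U\<in>TT. sub n W U \<longrightarrow> U = W"
    and i: "i < n" "i \<in> R" "W!i = {}" and c: "c \<in> C"
    and H: "H \<in> TT" "\<forall>p<n. W!p - {c} \<subseteq> H!p" "\<forall>p<n. c \<notin> H!p" "H!i \<noteq> {}"
    and uniq: "\<forall>p q. p < n \<longrightarrow> q < n \<longrightarrow> c \<in> W!p \<longrightarrow> c \<in> W!q \<longrightarrow> p = q"
  shows False
proof -
  have "H \<noteq> W" using H(4) i(3) by auto
  then obtain p where p: "p < n" "H!p \<subset> W!p" using lemmaI[OF GA W maxW H(1)] by blast
  have cp: "c \<in> W!p"
  proof (rule ccontr)
    assume "c \<notin> W!p"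
    then have "W!p \<subseteq> H!p" using H(2) p(1) by blast
    then show False using p(2) by blast
  qed
  have pR: "p \<in> R" using GA_Rne[OF GA W p(1)] cp by blast
  have B: "bnd n R c \<in> TT" using GA_bnd[OF GA c] .
  obtain V where V: "V \<in> TT" "V!p = H!p \<union> bnd n R c ! p"
    and Vo: "\<forall>i'<n. i' \<noteq> p \<longrightarrow> V!i' = H!i' \<or> V!i' = bnd n R c ! i'"
    using GA_elim[OF GA H(1) B p(1)] by blast
  have Vp: "W!p \<subseteq> V!p" using V(2) H(2) p(1) pR by auto
  have ip: "i \<noteq> p" using i(3) cp by auto
  have "V!i \<noteq> {}" using Vo i ip H(4) by auto
  then have "V \<noteq> W" using i(3) by auto
  then obtain q where q: "q < n" "V!q \<subset> W!q" using lemmaI[OF GA W maxW V(1)] by blast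
  have qp: "q \<noteq> p" using q Vp by auto
  show False
  proof (cases "V!q = H!q")
    case True
    have "c \<in> W!q"
    proof (rule ccontr)
      assume "c \<notin> W!q"
      then have "W!q \<subseteq> H!q" using H(2) q(1) by blast
      then show False using q(2) True by blast
    qed
    then show False using uniq q(1) p(1) cp qp by blast
  next
    case False
    then have Vq: "V!q = bnd n R c ! q" using Vo q(1) qp by blast
    show False
    proof (cases "q \<in> R")
      case True
      then have "V!q = {c}" using Vq q(1) by simp
      then have "c \<in> W!q" using q(2) by blast
      then show False using uniq q(1) p(1) cp qp by blast
    next
      case False
      then have "W!q = {}" using GA_R[OF GA W q(1)] by blast
      then show False using q(2) by blast
    qed
  qed
qed

lemma single_step:
  assumes GA: "GA n R C TT" and W: "W \<in> TT" and maxW: "\<forall>U\<in>TT. sub n W U \<longrightarrow> U = W"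
    and i: "i < n" "i \<in> R" "W!i = {}" and r: "r < n" "W!r = {c}"
    and Hr: "Hr \<in> TT" "\<forall>p<n. p \<noteq> r \<longrightarrow> W!p \<subseteq> Hr!p" "Hr!r = {}" "Hr!i \<noteq> {}"
    and Hc: "Hc \<in> TT" "\<forall>p<n. W!p - {c} \<subseteq> Hc!p" "\<forall>p<n. c \<notin> Hc!p" "\<forall>p\<in>R. Hc!p \<noteq> {}"
    and uniq: "\<forall>t t'. t < n \<longrightarrow> t' < n \<longrightarrow> c \<in> W!t \<longrightarrow> c \<in> W!t' \<longrightarrow> 2 \<le> card (W!t) \<longrightarrow> 2 \<le> card (W!t') \<longrightarrow> t = t'"
  shows False
proof -
  have c: "c \<in> C" using GA_C[OF GA W r(1)] r(2) by blast
  have rR: "r \<in> R" using GA_Rne[OF GA W r(1)] r(2) by blast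
  have ri: "r \<noteq> i" using r(2) i(3) by auto
  have finW: "\<And>q. q < n \<Longrightarrow> finite (W!q)" using GA_C[OF GA W] GA_finC[OF GA] by (meson finite_subset)
  have B: "bnd n R c \<in> TT" using GA_bnd[OF GA c] .
  obtain V where V: "V \<in> TT" "V!r = Hr!r \<union> bnd n R c ! r"
    and Vo: "\<forall>i'<n. i' \<noteq> r \<longrightarrow> V!i' = Hr!i' \<or> V!i' = bnd n R c ! i'"
    using GA_elim[OF GA Hr(1) B r(1)] by blast
  have Vr: "V!r = {c}" using V(2) Hr(3) rR r(1) by simp
  have Vi: "V!i \<noteq> {}" using Vo i(1,2) ri Hr(4) by auto
  have vgood: "\<And>q. q < n \<Longrightarrow> V!q \<subset> W!q \<Longrightarrow> c \<in> W!q \<and> 2 \<le> card (W!q) \<and> V!q = {c}"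
  proof -
    fix q assume q: "q < n" "V!q \<subset> W!q"
    have qr: "q \<noteq> r" using q(2) Vr r(2) by auto
    have "V!q \<noteq> Hr!q" using Hr(2) q qr by blast
    then have Vq: "V!q = bnd n R c ! q" using Vo q(1) qr by blast
    have qR: "q \<in> R"
    proof (rule ccontr)
      assume "q \<notin> R"
      then have "W!q = {}" using GA_R[OF GA W q(1)] by blast
      then show False using q(2) by blast
    qed
    then have Vq': "V!q = {c}" using Vq q(1) by simp
    then have cq: "c \<in> W!q" using q(2) by blast
    have "card {c} < card (W!q)" using q(2) Vq' finW[OF q(1)] by (metis psubset_card_mono)
    then show "c \<in> W!q \<and> 2 \<le> card (W!q) \<and> V!q = {c}" using cq Vq' by simp
  qed
  have "V \<noteq> W" using Vi i(3) by auto
  then obtain t where t: "t < n" "V!t \<subset> W!t" using lemmaI[OF GA W maxW V(1)] by blast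
  note tg = vgood[OF t]
  obtain Z where Z: "Z \<in> TT" "Z!t = V!t \<union> Hc!t"
    and Zo: "\<forall>i'<n. i' \<noteq> t \<longrightarrow> Z!i' = V!i' \<or> Z!i' = Hc!i'"
    using GA_elim[OF GA V(1) Hc(1) t(1)] by blast
  have Zt: "W!t \<subseteq> Z!t" using Z(2) tg Hc(2) t(1) by auto
  have it: "i \<noteq> t" using i(3) tg by auto
  have "Z!i \<noteq> {}" using Zo i it Vi Hc(4) by auto
  then have "Z \<noteq> W" using i(3) by auto
  then obtain q where q: "q < n" "Z!q \<subset> W!q" using lemmaI[OF GA W maxW Z(1)] by blast
  have qt: "q \<noteq> t" using q Zt by auto
  show False
  proof (cases "Z!q = V!q")
    case True
    then have "c \<in> W!q \<and> 2 \<le> card (W!q)" using vgood[OF q(1)] q(2) by simp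
    then show False using uniq q(1) t(1) tg qt by blast
  next
    case False
    then have Zq: "Z!q = Hc!q" using Zo q(1) qt by blast
    have cq: "c \<in> W!q"
    proof (rule ccontr)
      assume "c \<notin> W!q"
      then have "W!q \<subseteq> Hc!q" using Hc(2) q(1) by blast
      then show False using q(2) Zq by blast
    qed
    have qR: "q \<in> R" using GA_Rne[OF GA W q(1)] cq by blast
    obtain x where x: "x \<in> Hc!q" using Hc(4) qR by blast
    have xW: "x \<in> W!q" "x \<noteq> c" using x q(2) Zq Hc(3) q(1) by auto
    have "{c, x} \<subseteq> W!q" using cq xW by simp
    then have "card {c, x} \<le> card (W!q)" using finW[OF q(1)] by (rule card_mono[rotated])
    then have "2 \<le> card (W!q)" using xW(2) by simp
    then show False using uniq q(1) t(1) tg qt cq by blast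
  qed
qed

lemma acyc_mono: "E \<subseteq> F \<Longrightarrow> bip_acyclic F \<Longrightarrow> bip_acyclic E"
  unfolding bip_acyclic_def by blast

lemma comb:
  assumes len: "length W = n" and sub: "\<forall>p<n. W!p \<subseteq> C" and fin: "finite C" and Cne: "C \<noteq> {}"
    and acyc: "bip_acyclic (graph_of W)"
    and deg2: "\<forall>c\<in>C. \<exists>p q. p < n \<and> q < n \<and> p \<noteq> q \<and> c \<in> W!p \<and> c \<in> W!q"
  shows "\<exists>r c. r < n \<and> W!r = {c} \<and> (\<forall>t t'. t < n \<longrightarrow> t' < n \<longrightarrow> c \<in> W!t \<longrightarrow> c \<in> W!t' \<longrightarrow> 2 \<le> card (W!t) \<longrightarrow> 2 \<le> card (W!t') \<longrightarrow> t = t')"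
proof (rule ccontr)
  assume nex: "\<not> ?thesis"
  have nex': "\<And>r c. r < n \<Longrightarrow> W!r = {c} \<Longrightarrow> \<exists>t t'. t < n \<and> t' < n \<and> c \<in> W!t \<and> c \<in> W!t' \<and> 2 \<le> card (W!t) \<and> 2 \<le> card (W!t') \<and> t \<noteq> t'"
    using nex by blast
  have finW: "\<And>q. q < n \<Longrightarrow> finite (W!q)" using sub fin by (meson finite_subset)
  define E where "E = {(p,c). p < n \<and> c \<in> W!p \<and> 2 \<le> card (W!p)}"
  have EG: "E \<subseteq> graph_of W" unfolding E_def graph_of_def using len by auto
  have acE: "bip_acyclic E" using acyc_mono[OF EG acyc] .
  have finE: "finite E"
  proof -
    have "E \<subseteq> {..<n} \<times> C" unfolding E_def using sub by auto
    then show ?thesis using fin by (meson finite_SigmaI finite_lessThan finite_subset)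
  qed
  have bigcol: "\<And>c a. c \<in> C \<Longrightarrow> \<exists>a'. a' \<noteq> a \<and> (a', c) \<in> E"
  proof -
    fix c a assume c: "c \<in> C"
    obtain p q where pq: "p < n" "q < n" "p \<noteq> q" "c \<in> W!p" "c \<in> W!q" using deg2 c by blast
    show "\<exists>a'. a' \<noteq> a \<and> (a', c) \<in> E"
    proof (cases "\<exists>r<n. W!r = {c}")
      case True
      then obtain r where "r < n" "W!r = {c}" by blast
      then obtain t t' where tt: "t < n" "t' < n" "c \<in> W!t" "c \<in> W!t'" "2 \<le> card (W!t)" "2 \<le> card (W!t')" "t \<noteq> t'"
        using nex' by blast
      then have "(t, c) \<in> E" "(t', c) \<in> E" unfolding E_def by auto
      then show ?thesis using tt(7) by metis
    next
      case False
      have "\<And>s. s < n \<Longrightarrow> c \<in> W!s \<Longrightarrow> 2 \<le> card (W!s)"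
      proof -
        fix s assume s: "s < n" "c \<in> W!s"
        have "W!s \<noteq> {c}" using False s(1) by blast
        then obtain x where "x \<in> W!s" "x \<noteq> c" using s(2) by blast
        then have "{c, x} \<subseteq> W!s" using s(2) by simp
        then have "card {c, x} \<le> card (W!s)" using finW[OF s(1)] by (rule card_mono[rotated])
        then show "2 \<le> card (W!s)" using \<open>x \<noteq> c\<close> by simp
      qed
      then have "(p, c) \<in> E" "(q, c) \<in> E" unfolding E_def using pq by auto
      then show ?thesis using pq(3) by metis
    qed
  qed
  have hr: "\<And>a y. (a,y) \<in> E \<Longrightarrow> \<exists>y'. y' \<noteq> y \<and> (a,y') \<in> E"
  proof -
    fix a y assume ay: "(a,y) \<in> E"
    then have a: "a < n" "y \<in> W!a" "2 \<le> card (W!a)" unfolding E_def by auto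
    have "W!a \<noteq> {y}" using a(3) by auto
    then obtain y' where "y' \<in> W!a" "y' \<noteq> y" using a(2) by blast
    then show "\<exists>y'. y' \<noteq> y \<and> (a,y') \<in> E" unfolding E_def using a by auto
  qed
  have hc: "\<And>a y. (a,y) \<in> E \<Longrightarrow> \<exists>a'. a' \<noteq> a \<and> (a',y) \<in> E"
  proof -
    fix a y assume ay: "(a,y) \<in> E"
    then have "y \<in> C" unfolding E_def using sub by auto
    then show "\<exists>a'. a' \<noteq> a \<and> (a',y) \<in> E" using bigcol by blast
  qed
  have ne: "E \<noteq> {}"
  proof -
    obtain c where c: "c \<in> C" using Cne by blast
    then show ?thesis using bigcol[OF c, of 0] by blast
  qed
  show False using cycle_exists[OF finE ne hr hc] acE by simp
qed



lemma main_gen: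
  "card R + card C = k \<Longrightarrow> GA n R C TT \<Longrightarrow> C \<noteq> {} \<Longrightarrow> T \<in> TT \<Longrightarrow>
    \<exists>H\<in>TT. (\<forall>p\<in>R. H!p \<noteq> {}) \<and> sub n T H"
proof (induction k arbitrary: R C TT T rule: less_induct)
  case (less k R C TT T)
  note GA = less.prems(2)
  obtain W where W: "W \<in> TT" "sub n T W" and maxW: "\<forall>U\<in>TT. sub n W U \<longrightarrow> U = W"
    using exists_max[OF GA less.prems(4)] by blast
  show ?case
  proof (cases "\<forall>p\<in>R. W!p \<noteq> {}")
    case True
    then show ?thesis using W by blast
  next
    case False
    then obtain i where i: "i \<in> R" "W!i = {}" by blast
    have iN: "i < n" using i(1) GA_Rn[OF GA] by auto
    have finR: "finite R" using GA_Rn[OF GA] finite_subset by blast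
    have finC: "finite C" using GA_finC[OF GA] .
    have lenW: "length W = n" using GA_len[OF GA W(1)] .
    have False
    proof (cases "\<exists>c1 c2. c1 \<in> C \<and> c2 \<in> C \<and> c1 \<noteq> c2")
      case False
      obtain c0 where c0: "c0 \<in> C" using less.prems(3) by blast
      then have C1: "C = {c0}" using False by blast
      have "sub n W (bnd n R c0)"
        unfolding sub_def
      proof (intro allI impI)
        fix p assume p: "p < n"
        show "W!p \<subseteq> bnd n R c0 ! p"
        proof (cases "p \<in> R")
          case True then show ?thesis using GA_C[OF GA W(1) p] C1 p by simp
        next
          case False then show ?thesis using GA_R[OF GA W(1) p] p by simp
        qed
      qed
      then have "bnd n R c0 = W" using maxW GA_bnd[OF GA c0] by blast
      then have "W!i = {c0}" using iN i(1) by (metis bnd_nth)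
      then show False using i(2) by simp
    next
      case True
      then obtain c1 c2 where c12: "c1 \<in> C" "c2 \<in> C" "c1 \<noteq> c2" by blast
      have Hcol: "\<And>c. c \<in> C \<Longrightarrow> \<exists>Hc\<in>TT. (\<forall>p<n. W!p - {c} \<subseteq> Hc!p) \<and> (\<forall>p<n. c \<notin> Hc!p) \<and> (\<forall>p\<in>R. Hc!p \<noteq> {})"
      proof -
        fix c assume c: "c \<in> C"
        let ?TT = "{T \<in> TT. \<forall>p<n. c \<notin> T!p}"
        have GAc: "GA n R (C - {c}) ?TT" by (rule GA_col[OF GA])
        have ne: "C - {c} \<noteq> {}" using c12 by blast
        have "0 < card C" using c finC card_gt_0_iff by blast
        then have lt: "card R + card (C - {c}) < k"
          using less.prems(1) c finC by simp
        let ?Wc = "map (\<lambda>S. S - {c}) W"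
        have WcT: "?Wc \<in> TT" by (rule GA_sur[OF GA W(1)]) (auto simp: lenW)
        have "\<forall>p<n. c \<notin> ?Wc!p" using lenW by simp
        then have Wc: "?Wc \<in> ?TT" using WcT by blast
        obtain H where H: "H \<in> ?TT" "\<forall>p\<in>R. H!p \<noteq> {}" "sub n ?Wc H"
          using less.IH[OF lt refl GAc ne Wc] by blast
        have "\<forall>p<n. W!p - {c} \<subseteq> H!p" using H(3) lenW unfolding sub_def by simp
        then show "\<exists>Hc\<in>TT. (\<forall>p<n. W!p - {c} \<subseteq> Hc!p) \<and> (\<forall>p<n. c \<notin> Hc!p) \<and> (\<forall>p\<in>R. Hc!p \<noteq> {})"
          using H by blast
      qed
      have deg2: "\<forall>c\<in>C. \<exists>p q. p < n \<and> q < n \<and> p \<noteq> q \<and> c \<in> W!p \<and> c \<in> W!q"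
      proof (rule ballI, rule ccontr)
        fix c assume c: "c \<in> C" and nd: "\<not> (\<exists>p q. p < n \<and> q < n \<and> p \<noteq> q \<and> c \<in> W!p \<and> c \<in> W!q)"
        obtain H where H: "H \<in> TT" "\<forall>p<n. W!p - {c} \<subseteq> H!p" "\<forall>p<n. c \<notin> H!p" "\<forall>p\<in>R. H!p \<noteq> {}"
          using Hcol[OF c] by blast
        have uniq: "\<forall>p q. p < n \<longrightarrow> q < n \<longrightarrow> c \<in> W!p \<longrightarrow> c \<in> W!q \<longrightarrow> p = q" using nd by blast
        show False using col_step[OF GA W(1) maxW iN i(1) i(2) c H(1-3) _ uniq] H(4) i(1) by blast
      qed
      have WsubC: "\<forall>p<n. W!p \<subseteq> C" using GA_C[OF GA W(1)] by blast
      obtain r c where r: "r < n" "W!r = {c}"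
        and uniq: "\<forall>t t'. t < n \<longrightarrow> t' < n \<longrightarrow> c \<in> W!t \<longrightarrow> c \<in> W!t' \<longrightarrow> 2 \<le> card (W!t) \<longrightarrow> 2 \<le> card (W!t') \<longrightarrow> t = t'"
        using comb[OF lenW WsubC finC less.prems(3) GA_acyc[OF GA W(1)] deg2] by blast
      have cC: "c \<in> C" using WsubC r by blast
      have rR: "r \<in> R" using GA_Rne[OF GA W(1) r(1)] r(2) by blast
      have ri: "r \<noteq> i" using r(2) i(2) by auto
      obtain Hc where Hc: "Hc \<in> TT" "\<forall>p<n. W!p - {c} \<subseteq> Hc!p" "\<forall>p<n. c \<notin> Hc!p" "\<forall>p\<in>R. Hc!p \<noteq> {}"
        using Hcol[OF cC] by blast
      let ?TT = "{T \<in> TT. T!r = {}}"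
      have GAr: "GA n (R - {r}) C ?TT" by (rule GA_row[OF GA r(1)])
      have "0 < card R" using rR finR card_gt_0_iff by blast
      then have lt: "card (R - {r}) + card C < k"
        using less.prems(1) rR finR by simp
      let ?Wr = "W[r := {}]"
      have WrT: "?Wr \<in> TT"
      proof (rule GA_sur[OF GA W(1)])
        show "length ?Wr = n" using lenW by simp
      next
        fix p assume "p < n"
        show "?Wr!p \<subseteq> W!p" using r(1) lenW by (cases "p = r") auto
      qed
      have "?Wr!r = {}" using r(1) lenW by simp
      then have Wr: "?Wr \<in> ?TT" using WrT by blast
      obtain Hr where Hr: "Hr \<in> ?TT" "\<forall>p\<in>R - {r}. Hr!p \<noteq> {}" "sub n ?Wr Hr"
        using less.IH[OF lt refl GAr less.prems(3) Wr] by blast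
      have Hr2: "\<forall>p<n. p \<noteq> r \<longrightarrow> W!p \<subseteq> Hr!p"
      proof (intro allI impI)
        fix p assume p: "p < n" "p \<noteq> r"
        then have "?Wr!p = W!p" by simp
        then show "W!p \<subseteq> Hr!p" using Hr(3) p(1) unfolding sub_def by metis
      qed
      have Hri: "Hr!i \<noteq> {}" using Hr(2) i(1) ri by blast
      show False using single_step[OF GA W(1) maxW iN i(1) i(2) r _ Hr2 _ Hri Hc(1) Hc(2) Hc(3) Hc(4) uniq] Hr(1) by blast
    qed
    then show ?thesis by blast
  qed
qed



lemma ext_GA:
  assumes "ext_generic_TOM n d TT"
  shows "GA n {..<n} {0..<d} TT"
proof -
  have A1: "\<forall>T\<in>TT. semitype n d T \<and> bip_acyclic (graph_of T)"
    and A2: "\<forall>j<d. replicate n {j} \<in> TT"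
    and A3: "\<forall>T\<in>TT. \<forall>T'. semitype n d T' \<and> graph_of T' \<subseteq> graph_of T \<longrightarrow> T' \<in> TT"
    and A5: "\<forall>U\<in>TT. \<forall>V\<in>TT. \<forall>i<n. \<exists>W\<in>TT. W ! i = U ! i \<union> V ! i \<and>
        (\<forall>i'<n. i' \<noteq> i \<longrightarrow> W ! i' \<in> {U ! i', V ! i'})"
    using assms unfolding ext_generic_TOM_def by blast+
  have 1: "\<forall>T\<in>TT. length T = n \<and> (\<forall>p<n. T!p \<subseteq> {0..<d}) \<and> (\<forall>p<n. p \<notin> {..<n} \<longrightarrow> T!p = {}) \<and> bip_acyclic (graph_of T)"
    using A1 unfolding semitype_def by auto
  have 2: "\<forall>j\<in>{0..<d}. bnd n {..<n} j \<in> TT"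
  proof
    fix j assume j: "j \<in> {0..<d}"
    have "bnd n {..<n} j = replicate n {j}" by (rule nth_equalityI) auto
    then show "bnd n {..<n} j \<in> TT" using A2 j by simp
  qed
  have 3: "\<forall>T\<in>TT. \<forall>T'. length T' = n \<and> (\<forall>p<n. T'!p \<subseteq> T!p) \<longrightarrow> T' \<in> TT"
  proof (intro ballI allI impI)
    fix T T' assume T: "T \<in> TT" and T': "length T' = n \<and> (\<forall>p<n. T'!p \<subseteq> T!p)"
    have sT: "semitype n d T" using A1 T by blast
    have "semitype n d T'" using sT T' unfolding semitype_def by blast
    moreover have "graph_of T' \<subseteq> graph_of T" using T' sT unfolding graph_of_def semitype_def by auto
    ultimately show "T' \<in> TT" using A3 T by blast
  qed
  have 4: "\<forall>U\<in>TT. \<forall>V\<in>TT. \<forall>i<n. \<exists>W\<in>TT. W!i = U!i \<union> V!i \<and> (\<forall>i'<n. i' \<noteq> i \<longrightarrow> W!i' = U!i' \<or> W!i' = V!i')"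
    using A5 by fastforce
  have 0: "{..<n} \<subseteq> {..<n}" "finite {0..<d}" by auto
  show ?thesis unfolding GA_def using 0 1 2 3 4 by (intro conjI)
qed

theorem mainTheorem3:
  fixes n d :: nat and TT :: "nat set list set"
  assumes "0 < n" and "0 < d"
    and "ext_generic_TOM n d TT"
    and "T \<in> TT"
  shows "\<exists>Tp\<in>TT. honest_type n d Tp \<and> graph_of T \<subseteq> graph_of Tp"
proof -
  have GA: "GA n {..<n} {0..<d} TT" by (rule ext_GA[OF assms(3)])
  have "{0..<d} \<noteq> {}" using assms(2) by simp
  then obtain H where H: "H \<in> TT" "\<forall>p\<in>{..<n}. H!p \<noteq> {}" "sub n T H"
    using main_gen[OF refl GA _ assms(4)] by blast
  have sH: "semitype n d H" using assms(3) H(1) unfolding ext_generic_TOM_def by blast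
  have lT: "length T = n" using GA_len[OF GA assms(4)] .
  have "honest_type n d H" unfolding honest_type_def using sH H(2) by simp
  moreover have "graph_of T \<subseteq> graph_of H"
    using H(3) lT sH unfolding graph_of_def sub_def semitype_def by auto
  ultimately show ?thesis using H(1) by blast
qed


end
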